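(* Let $r\ge1$ and $\alpha,\beta,\gamma^1,\dots,\gamma^r\in\mathrm{ord}$. 1. If $\alpha\le\beta$ and $\beta<\alpha,\gamma^1,\dots,\gamma^r$, then $\beta<\gamma^1,\dots,\gamma^r$. 2. If $\beta<\alpha$ and $\alpha\le\beta,\gamma^1,\dots,\gamma^r$, then $\alpha\le\gamma^1,\dots,\gamma^r$.
   Context: Work constructively. Let $\mathfrak F$ be a set of index sets containing $\mathbb N$ and each $\mathbb N_k=\{n\in\mathbb N:n<k\}$ ($k\ge0$), closed (up to isomorphism) under finitely enumerated subsets, sets of finitely enumerated subsets, and disjoint unions indexed by elements of $\mathfrak F$. A finitely enumerated subset of $A$ is one given by a map $\mathbb N_k\to A$; write $F\subseteq_f I$. The set $\mathrm{ord}$ is inductively generated by $\underline 0$ and, for every family $(\alpha_i)_{i\in I}$ with $I\in\mathfrak F$, $\alpha_i\in\mathrm{ord}$, an element $\mathrm S(\alpha_i)_{i\in I}$; for such $\alpha$, $I_\alpha=I$ and $\alpha_i$ are its definitional subordinals; $I_{\underline 0}=\emptyset$. For a finite list $F$ in $I_\alpha$, $\alpha_F$ is the list of the $\alpha_i$, $i\in F$. Relations between an element and a nonempty finite list, by simultaneous induction: $\alpha\le\beta^1,\dots,\beta^m$ means $\alpha_i<\beta^1,\dots,\beta^m$ for all $i\in I_\alpha$; $\alpha<\beta^1,\dots,\beta^m$ means there exist $F_1\subseteq_f I_{\beta^1},\dots,F_m\subseteq_f I_{\beta^m}$, not all empty, with $\alpha\le\beta^1_{F_1},\dots,\beta^m_{F_m}$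 (concatenated list); $\alpha\le\beta$, $\alpha<\beta$ are the case $m=1$. *)

theory Defs
  imports Main "HOL-Library.Equipollence"
begin

text \<open>Tree ordinals with branching over index sets taken from a type 'i.
  Sup I f stands for S(f i)_{i in I}; values of f outside I are
  normalised to Zero in the carrier ord_of below.\<close>

datatype 'i ord = Zero | Sup "'i set" "'i \<Rightarrow> 'i ord"

fun idx :: "'i ord \<Rightarrow> 'i set" where
  "idx Zero = {}"
| "idx (Sup I f) = I"

fun sub :: "'i ord \<Rightarrow> 'i \<Rightarrow> 'i ord" where
  "sub Zero i = Zero"
| "sub (Sup I f) i = f i"

text \<open>Standing assumptions on the collection of index sets (up to equipollence).
  A finitely enumerated subset of I is a list over I (a map N_k -> I).\<close>

definition index_family :: "'i set set \<Rightarrow> bool" where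
  "index_family FF \<longleftrightarrow>
     (\<exists>I\<in>FF. I \<approx> (UNIV :: nat set))
   \<and> (\<forall>k::nat. \<exists>I\<in>FF. I \<approx> {n::nat. n < k})
   \<and> (\<forall>I\<in>FF. \<forall>xs. set xs \<subseteq> I \<longrightarrow> (\<exists>J\<in>FF. J \<approx> set xs))
   \<and> (\<forall>I\<in>FF. \<exists>J\<in>FF. J \<approx> {xs. set xs \<subseteq> I})
   \<and> (\<forall>I\<in>FF. \<forall>Js. (\<forall>i\<in>I. Js i \<in> FF) \<longrightarrow> (\<exists>K\<in>FF. K \<approx> Sigma I Js))"

inductive_set ord_of :: "'i set set \<Rightarrow> 'i ord set" for FF where
  zero: "Zero \<in> ord_of FF"
| sup: "I \<in> FF \<Longrightarrow> (\<forall>i\<in>I. f i \<in> ord_of FF) \<Longrightarrow> (\<forall>i. i \<notin> I \<longrightarrow> f i = Zero)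
        \<Longrightarrow> Sup I f \<in> ord_of FF"

definition sel :: "'i ord list \<Rightarrow> 'i list list \<Rightarrow> 'i ord list" where
  "sel bs Fs = concat (map (\<lambda>(b, F). map (sub b) F) (zip bs Fs))"

inductive ole :: "'i ord \<Rightarrow> 'i ord list \<Rightarrow> bool"
  and olt :: "'i ord \<Rightarrow> 'i ord list \<Rightarrow> bool" where
  ole_intro: "(\<forall>i\<in>idx a. olt (sub a i) bs) \<Longrightarrow> ole a bs"
| olt_intro: "length Fs = length bs \<Longrightarrow> (\<forall>j<length bs. set (Fs ! j) \<subseteq> idx (bs ! j))
        \<Longrightarrow> (\<exists>j<length bs. Fs ! j \<noteq> []) \<Longrightarrow> ole a (sel bs Fs) \<Longrightarrow> olt a bs"

end

theory Submission
  imports Defs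
begin

lemma sub_induct:
  assumes "\<And>x. (\<And>i. i \<in> idx x \<Longrightarrow> P (sub x i)) \<Longrightarrow> P x"
  shows "P x"
proof (induction x)
  case Zero
  then show ?case using assms[of Zero] by simp
next
  case (Sup I f)
  then show ?case using assms[of "Sup I f"] by simp
qed

inductive LE :: "'i ord \<Rightarrow> 'i ord \<Rightarrow> bool"
  and LT :: "'i ord \<Rightarrow> 'i ord \<Rightarrow> bool" where
  LE_intro: "(\<forall>i\<in>idx x. LT (sub x i) y) \<Longrightarrow> LE x y"
| LT_intro: "j \<in> idx y \<Longrightarrow> LE x (sub y j) \<Longrightarrow> LT x y"

lemma LE_iff: "LE x y \<longleftrightarrow> (\<forall>i\<in>idx x. LT (sub x i) y)"
  by (auto elim: LE.cases intro: LE_intro)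

lemma LT_iff: "LT x y \<longleftrightarrow> (\<exists>j\<in>idx y. LE x (sub y j))"
  by (auto elim: LT.cases intro: LT_intro)

lemma LE_D: "LE x y \<Longrightarrow> i \<in> idx x \<Longrightarrow> LT (sub x i) y"
  using LE_iff by metis

lemma LE_I: "(\<And>i. i \<in> idx x \<Longrightarrow> LT (sub x i) y) \<Longrightarrow> LE x y"
  using LE_iff by metis

lemma LT_E: "LT x y \<Longrightarrow> \<exists>j. j \<in> idx y \<and> LE x (sub y j)"
  using LT_iff by metis

lemma trans_aux: "(\<forall>x z. LT x y \<longrightarrow> LE y z \<longrightarrow> LT x z) \<and> (\<forall>x z. LE x y \<longrightarrow> LE y z \<longrightarrow> LE x z)"
proof (induction y rule: sub_induct)
  case (1 y)
  have T2: "LT x z" if a1: "LT x y" and a2: "LE y z" for x z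
  proof -
    obtain j where j: "j \<in> idx y" "LE x (sub y j)" using LT_E[OF a1] by blast
    have "LT (sub y j) z" using LE_D[OF a2 j(1)] .
    then obtain k where k: "k \<in> idx z" "LE (sub y j) (sub z k)" using LT_E by blast
    have "LE x (sub z k)" using 1[OF j(1)] j(2) k(2) by blast
    then show ?thesis by (rule LT_intro[OF k(1)])
  qed
  moreover have "LE x z" if a1: "LE x y" and a2: "LE y z" for x z
  proof (rule LE_I)
    fix i assume "i \<in> idx x"
    then show "LT (sub x i) z" using T2[OF LE_D[OF a1] a2] by blast
  qed
  ultimately show ?case by blast
qed

lemma LT_LE_trans: "LT x y \<Longrightarrow> LE y z \<Longrightarrow> LT x z"
  using trans_aux by blast

lemma LE_trans: "LE x y \<Longrightarrow> LE y z \<Longrightarrow> LE x z"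
  using trans_aux by blast

lemma LT_irrefl: "\<not> LT x x"
proof (induction x rule: sub_induct)
  case (1 x)
  show ?case
  proof
    assume "LT x x"
    then obtain j where j: "j \<in> idx x" "LE x (sub x j)" using LT_E by blast
    have "LT (sub x j) (sub x j)" using LE_D[OF j(2) j(1)] .
    then show False using 1[OF j(1)] by blast
  qed
qed

lemma LT_imp_LE: "LT x y \<Longrightarrow> LE x y"
proof (induction x arbitrary: y rule: sub_induct)
  case (1 x)
  then obtain j where j: "j \<in> idx y" "LE x (sub y j)" using LT_E by blast
  show ?case
  proof (rule LE_I)
    fix i assume i: "i \<in> idx x"
    have "LT (sub x i) (sub y j)" using LE_D[OF j(2) i] .
    then have "LE (sub x i) (sub y j)" using 1(1)[OF i] by blast
    then show "LT (sub x i) y" by (rule LT_intro[OF j(1)])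
  qed
qed

lemma total: "LE x y \<or> LT y x"
proof (induction x arbitrary: y rule: sub_induct)
  case (1 x)
  show ?case
  proof (cases "LE x y")
    case False
    then have "\<not> (\<forall>i\<in>idx x. LT (sub x i) y)" by (simp add: LE_iff)
    then obtain i where i: "i \<in> idx x" "\<not> LT (sub x i) y" by blast
    have "LE y (sub x i)"
    proof (rule LE_I)
      fix j assume j: "j \<in> idx y"
      have "\<not> LE (sub x i) (sub y j)" using i(2) LT_intro[OF j, of "sub x i"] by blast
      then show "LT (sub y j) (sub x i)" using 1[OF i(1), of "sub y j"] by simp
    qed
    then show ?thesis using LT_intro[OF i(1), of y] by simp
  qed simp
qed

lemma LE_refl: "LE x x"
proof (cases "LE x x")
  case False
  then have "LT x x" using total[of x x] by simp
  then show ?thesis by (rule LT_imp_LE)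
qed

lemma LE_total: "LE x y \<or> LE y x"
proof (cases "LE x y")
  case False
  then have "LT y x" using total[of x y] by simp
  then show ?thesis using LT_imp_LE[of y x] by simp
qed simp

lemma max_exists: "bs \<noteq> [] \<Longrightarrow> \<exists>m\<in>set bs. \<forall>b\<in>set bs. LE b m"
proof (induction bs)
  case Nil
  then show ?case by simp
next
  case (Cons a bs)
  show ?case
  proof (cases "bs = []")
    case True
    then show ?thesis using LE_refl[of a] by simp
  next
    case False
    then obtain m where m: "m \<in> set bs" "\<forall>b\<in>set bs. LE b m" using Cons.IH by blast
    show ?thesis
    proof (cases "LE a m")
      case True
      then have "\<forall>b\<in>set (a # bs). LE b m" using m(2) by simp
      then show ?thesis using m(1) by (meson list.set_intros(2))
    next
      case False
      then have am: "LE m a" using LE_total by blast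
      have "\<forall>b\<in>set (a # bs). LE b a"
      proof
        fix b assume "b \<in> set (a # bs)"
        then have "b = a \<or> b \<in> set bs" by simp
        then show "LE b a"
        proof
          assume "b \<in> set bs"
          then show ?thesis using m(2) LE_trans[OF _ am] by blast
        qed (simp add: LE_refl)
      qed
      then show ?thesis by (meson list.set_intros(1))
    qed
  qed
qed

lemma sel_mem: "d \<in> set (sel bs Fs) \<Longrightarrow> \<exists>k<length bs. k < length Fs \<and> (\<exists>i\<in>set (Fs ! k). d = sub (bs ! k) i)"
  unfolding sel_def by (auto simp: set_zip)

lemma sel_mem_rev: "length Fs = length bs \<Longrightarrow> k < length bs \<Longrightarrow> i \<in> set (Fs ! k) \<Longrightarrow> sub (bs ! k) i \<in> set (sel bs Fs)"
  unfolding sel_def by (force simp: set_zip)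

lemma to_LE:
  "ole (x::'a ord) bs \<Longrightarrow> idx x = {} \<or> (\<exists>b\<in>set bs. LE x b)"
  "olt (x'::'a ord) bs' \<Longrightarrow> (\<exists>b\<in>set bs'. LT x' b)"
proof (induction x bs and x' bs' rule: ole_olt.inducts)
  case (ole_intro a bs)
  note h = this
  have IH: "\<forall>i\<in>idx a. \<exists>b\<in>set bs. LT (sub a i) b" using h by blast
  show ?case
  proof (cases "idx a = {}")
    case False
    then obtain i0 where "i0 \<in> idx a" by blast
    then obtain b0 where "b0 \<in> set bs" using IH by blast
    then have "bs \<noteq> []" by auto
    then obtain m where m: "m \<in> set bs" "\<forall>b\<in>set bs. LE b m" using max_exists by blast
    have "LT (sub a i) m" if i: "i \<in> idx a" for i
    proof -
      have "\<exists>b\<in>set bs. LT (sub a i) b" using IH i by (rule bspec)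
      then obtain b where b: "b \<in> set bs" "LT (sub a i) b" by (rule bexE)
      have "LE b m" using m(2) b(1) by (rule bspec)
      then show ?thesis using LT_LE_trans[OF b(2)] by simp
    qed
    then have "LE a m" by (rule LE_I)
    then show ?thesis using m(1) by blast
  next
    case True
    then show ?thesis by simp
  qed
next
    case (olt_intro Fs bs a)
    show ?case
    proof (cases "idx a = {}")
      case True
      obtain j where j: "j < length bs" "Fs ! j \<noteq> []" using olt_intro by blast
      then obtain i where i: "i \<in> set (Fs ! j)" by (cases "Fs ! j") auto
      then have "i \<in> idx (bs ! j)" using olt_intro j by blast
      moreover have "LE a (sub (bs ! j) i)" using True by (intro LE_I) auto
      ultimately have "LT a (bs ! j)" by (rule LT_intro)
      then show ?thesis using j(1) nth_mem by blast
    next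
      case False
      then obtain d where d: "d \<in> set (sel bs Fs)" "LE a d" using olt_intro by blast
      then obtain k i where k: "k < length bs" "i \<in> set (Fs ! k)" "d = sub (bs ! k) i"
        using sel_mem by blast
      then have "i \<in> idx (bs ! k)" using olt_intro by blast
      moreover have "LE a (sub (bs ! k) i)" using d k by simp
      ultimately have "LT a (bs ! k)" by (rule LT_intro)
      then show ?thesis using k(1) nth_mem by blast
    qed
  qed

lemma from_LE:
  "LE (x::'a ord) y \<Longrightarrow> y \<in> set bs \<Longrightarrow> ole x bs"
  "LT (x'::'a ord) y' \<Longrightarrow> y' \<in> set bs' \<Longrightarrow> olt x' bs'"
proof (induction x y and x' y' arbitrary: bs and bs' rule: LE_LT.inducts)
  case (LE_intro x y bs)
  have "olt (sub x i) bs" if "i \<in> idx x" for i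
    using LE_intro.IH that LE_intro.prems by blast
  then show ?case by (intro ole_intro) blast
next
  case (LT_intro j y x bs)
  define Fs where "Fs = map (\<lambda>c. if c = y then [j] else []) bs"
  obtain k where k: "k < length bs" "bs ! k = y" using LT_intro.prems by (meson in_set_conv_nth)
  have len: "length Fs = length bs" unfolding Fs_def by simp
  have Fk: "Fs ! k = [j]" unfolding Fs_def using k by simp
  have "sub y j \<in> set (sel bs Fs)" using sel_mem_rev[OF len k(1), of j] Fk k by simp
  then have "ole x (sel bs Fs)" using LT_intro.IH by blast
  moreover have "\<forall>k'<length bs. set (Fs ! k') \<subseteq> idx (bs ! k')"
    unfolding Fs_def using LT_intro.hyps(1) by auto
  moreover have "\<exists>k'<length bs. Fs ! k' \<noteq> []" using k Fk by auto
  ultimately show ?case using len by (intro olt_intro) auto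
qed

theorem lemma4p12:
  fixes FF :: "'i set set" and a b :: "'i ord" and gs :: "'i ord list"
  assumes "index_family FF"
    and "a \<in> ord_of FF" and "b \<in> ord_of FF"
    and "gs \<noteq> []" and "set gs \<subseteq> ord_of FF"
  shows "(ole a [b] \<and> olt b (a # gs) \<longrightarrow> olt b gs)
       \<and> (olt b [a] \<and> ole a (b # gs) \<longrightarrow> ole a gs)"
proof (intro conjI impI; elim conjE)
  assume h1: "ole a [b]" and h2: "olt b (a # gs)"
  obtain c where c: "c \<in> set (a # gs)" "LT b c" using to_LE(2)[OF h2] by blast
  show "olt b gs"
  proof (cases "c = a")
    case True
    have "LT b a" using c True by simp
    then obtain j where "j \<in> idx a" using LT_E by blast
    then have "idx a \<noteq> {}" by blast
    then have "LE a b" using to_LE(1)[OF h1] by simp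
    then have "LT b b" using LT_LE_trans[OF \<open>LT b a\<close>] by simp
    then show ?thesis using LT_irrefl by blast
  next
    case False
    then have "c \<in> set gs" using c(1) by simp
    then show ?thesis using from_LE(2)[OF c(2)] by blast
  qed
next
  assume h1: "olt b [a]" and h2: "ole a (b # gs)"
  have "LT b a" using to_LE(2)[OF h1] by simp
  have "idx a = {} \<or> (\<exists>c\<in>set (b # gs). LE a c)" using to_LE(1)[OF h2] .
  then show "ole a gs"
  proof (elim disjE bexE)
    assume "idx a = {}"
    then show ?thesis by (intro ole_intro) auto
  next
    fix c assume c: "c \<in> set (b # gs)" "LE a c"
    show ?thesis
    proof (cases "c = b")
      case True
      then have "LT b b" using c(2) LT_LE_trans[OF \<open>LT b a\<close>] by simp
      then show ?thesis using LT_irrefl by blast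
    next
      case False
      then have "c \<in> set gs" using c(1) by simp
      then show ?thesis using from_LE(1)[OF c(2)] by blast
    qed
  qed
qed

end
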